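(* Let $\mathbb{A}$ be an epistemic Heyting algebra and let $i$ be an agent. Then $\lozenge_i\mathbb{A}:=\{\lozenge_i a\mid a\in\mathbb{A}\}$ is a Boolean subalgebra of (the Heyting algebra reduct of) $\mathbb{A}$. Furthermore, setting $\Box_i\mathbb{A}:=\{\Box_i a\mid a\in\mathbb{A}\}$, we have $\lozenge_i\mathbb{A}=\Box_i\mathbb{A}$.
   Context: Fix a set $\mathsf{Ag}$ of agents. A monadic Heyting algebra is a Heyting algebra $\mathbb{L}$ together with, for each $i\in\mathsf{Ag}$, monotone unary operations $\lozenge_i,\Box_i$ on $\mathbb{L}$ such that for all $a,b$: $a\leq\lozenge_i a$; $\Box_i a\leq a$; $\lozenge_i(a\vee b)\leq\lozenge_i a\vee\lozenge_i b$; $\Box_i(a\to b)\leq\Box_i a\to\Box_i b$; $\lozenge_i a\leq\Box_i\lozenge_i a$; $\lozenge_i\Box_i a\leq\Box_i a$; $\Box_i(a\to b)\leq\lozenge_i a\to\lozenge_i b$; $\lozenge_i\bot\leq\bot$; $\top\leq\Box_i\top$. An epistemic Heyting algebra is a finite monadic Heyting algebra such that $\lozenge_i a\vee\neg\lozenge_i a=\top$ for every $i\in\mathsf{Ag}$ and every $a$ (where $\neg x:=x\to\bot$). *)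

theory Defs
  imports Main
begin

definition heyting_imp :: "('a::bounded_lattice \<Rightarrow> 'a \<Rightarrow> 'a) \<Rightarrow> bool" where
  "heyting_imp imp \<longleftrightarrow> (\<forall>a b c. c \<le> imp a b \<longleftrightarrow> inf c a \<le> b)"

definition hneg :: "('a::bounded_lattice \<Rightarrow> 'a \<Rightarrow> 'a) \<Rightarrow> 'a \<Rightarrow> 'a" where
  "hneg imp x = imp x bot"

definition monadic_heyting ::
  "('a::bounded_lattice \<Rightarrow> 'a \<Rightarrow> 'a) \<Rightarrow> ('i \<Rightarrow> 'a \<Rightarrow> 'a) \<Rightarrow> ('i \<Rightarrow> 'a \<Rightarrow> 'a) \<Rightarrow> bool" where
  "monadic_heyting imp dia box \<longleftrightarrow> heyting_imp imp \<and>
    (\<forall>i. mono (dia i) \<and> mono (box i) \<and>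
      (\<forall>a b.
         a \<le> dia i a \<and>
         box i a \<le> a \<and>
         dia i (sup a b) \<le> sup (dia i a) (dia i b) \<and>
         box i (imp a b) \<le> imp (box i a) (box i b) \<and>
         dia i a \<le> box i (dia i a) \<and>
         dia i (box i a) \<le> box i a \<and>
         box i (imp a b) \<le> imp (dia i a) (dia i b)) \<and>
      dia i bot \<le> bot \<and>
      top \<le> box i top)"

definition epistemic_heyting ::
  "('a::{bounded_lattice,finite} \<Rightarrow> 'a \<Rightarrow> 'a) \<Rightarrow> ('i \<Rightarrow> 'a \<Rightarrow> 'a) \<Rightarrow> ('i \<Rightarrow> 'a \<Rightarrow> 'a) \<Rightarrow> bool" where
  "epistemic_heyting imp dia box \<longleftrightarrow> monadic_heyting imp dia box \<and>
    (\<forall>i a. sup (dia i a) (hneg imp (dia i a)) = top)"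

definition heyting_subalgebra :: "('a::bounded_lattice \<Rightarrow> 'a \<Rightarrow> 'a) \<Rightarrow> 'a set \<Rightarrow> bool" where
  "heyting_subalgebra imp S \<longleftrightarrow> bot \<in> S \<and> top \<in> S \<and>
    (\<forall>x\<in>S. \<forall>y\<in>S. inf x y \<in> S \<and> sup x y \<in> S \<and> imp x y \<in> S)"

definition boolean_subalgebra :: "('a::bounded_lattice \<Rightarrow> 'a \<Rightarrow> 'a) \<Rightarrow> 'a set \<Rightarrow> bool" where
  "boolean_subalgebra imp S \<longleftrightarrow> heyting_subalgebra imp S \<and>
    (\<forall>x\<in>S. sup x (hneg imp x) = top)"

end

theory Submission
  imports Defs
begin

lemma hi: "heyting_imp imp \<Longrightarrow> (c \<le> imp a b) = (inf c a \<le> b)"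
  unfolding heyting_imp_def by blast

lemma hdist:
  fixes imp :: "'a::bounded_lattice \<Rightarrow> 'a \<Rightarrow> 'a"
  assumes h: "heyting_imp imp"
  shows "inf (c::'a) (sup a b) \<le> sup (inf c a) (inf c b)"
proof -
  let ?S = "sup (inf c a) (inf c b)"
  have "a \<le> imp c ?S" using hi[OF h] by (simp add: inf_commute le_supI1)
  moreover have "b \<le> imp c ?S" using hi[OF h] by (simp add: inf_commute le_supI2)
  ultimately have "sup a b \<le> imp c ?S" by simp
  then show ?thesis using hi[OF h] by (simp add: inf_commute)
qed

lemma hnot_inf:
  fixes imp :: "'a::bounded_lattice \<Rightarrow> 'a \<Rightarrow> 'a"
  assumes h: "heyting_imp imp"
  shows "inf x (imp x bot) = bot"
proof -
  have "imp x bot \<le> imp x bot" by simp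
  then have "inf (imp x bot) x \<le> bot" using hi[OF h] by blast
  then show ?thesis by (simp add: inf_commute bot_unique)
qed

lemma hcompl_imp:
  fixes imp :: "'a::bounded_lattice \<Rightarrow> 'a \<Rightarrow> 'a"
  assumes h: "heyting_imp imp" and c: "sup x (imp x bot) = top"
  shows "imp x y = sup (imp x bot) y"
proof (rule antisym)
  have "imp x y = inf (imp x y) (sup x (imp x bot))" using c by simp
  also have "\<dots> \<le> sup (inf (imp x y) x) (inf (imp x y) (imp x bot))" by (rule hdist[OF h])
  also have "\<dots> \<le> sup y (imp x bot)"
  proof (rule sup_mono)
    show "inf (imp x y) x \<le> y" using hi[OF h] by blast
  qed simp
  finally show "imp x y \<le> sup (imp x bot) y" by (simp add: sup_commute)
next
  have "inf (imp x bot) x \<le> y" using hnot_inf[OF h, of x] by (simp add: inf_commute)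
  then have 1: "imp x bot \<le> imp x y" using hi[OF h] by blast
  have "inf y x \<le> y" by simp
  then have 2: "y \<le> imp x y" using hi[OF h] by blast
  show "sup (imp x bot) y \<le> imp x y" using 1 2 by simp
qed

lemma hnotnot:
  fixes imp :: "'a::bounded_lattice \<Rightarrow> 'a \<Rightarrow> 'a"
  assumes h: "heyting_imp imp" and c: "sup x (imp x bot) = top"
  shows "imp (imp x bot) bot = x"
proof (rule antisym)
  let ?n = "imp x bot"
  have "imp ?n bot = inf (imp ?n bot) (sup x ?n)" using c by simp
  also have "\<dots> \<le> sup (inf (imp ?n bot) x) (inf (imp ?n bot) ?n)" by (rule hdist[OF h])
  also have "\<dots> \<le> x"
    using hnot_inf[OF h, of ?n] by (simp add: inf_commute)
  finally show "imp ?n bot \<le> x" .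
next
  have "inf x (imp x bot) \<le> bot" using hnot_inf[OF h, of x] by simp
  then show "x \<le> imp (imp x bot) bot" using hi[OF h] by blast
qed

theorem fact1:
  fixes imp :: "'a::{bounded_lattice,finite} \<Rightarrow> 'a \<Rightarrow> 'a"
    and dia box :: "'i \<Rightarrow> 'a \<Rightarrow> 'a"
    and i :: 'i
  assumes "epistemic_heyting imp dia box"
  shows "boolean_subalgebra imp (range (dia i)) \<and> range (dia i) = range (box i)"
proof -
  let ?d = "dia i" and ?b = "box i"
  have h: "heyting_imp imp" using assms unfolding epistemic_heyting_def monadic_heyting_def by blast
  have md: "mono ?d" and mb: "mono ?b"
    using assms unfolding epistemic_heyting_def monadic_heyting_def by blast+
  have ax: "\<And>a c. a \<le> ?d a \<and> ?b a \<le> a \<and> ?d (sup a c) \<le> sup (?d a) (?d c) \<and>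
         ?d a \<le> ?b (?d a) \<and> ?d (?b a) \<le> ?b a \<and> ?b (imp a c) \<le> imp (?d a) (?d c)"
    using assms unfolding epistemic_heyting_def monadic_heyting_def by blast
  have dbot: "?d bot = bot" "top \<le> ?d top"
    using assms ax unfolding epistemic_heyting_def monadic_heyting_def by (auto simp: bot_unique top_unique)
  have em: "\<And>a. sup (?d a) (imp (?d a) bot) = top"
    using assms unfolding epistemic_heyting_def hneg_def by blast
  have bd: "\<And>a. ?b (?d a) = ?d a" using ax by (meson antisym)
  have db: "\<And>a. ?d (?b a) = ?b a" using ax by (meson antisym)
  have fixD: "\<And>x. x \<in> range ?d \<longleftrightarrow> ?d x = x"
  proof
    fix x assume "x \<in> range ?d"
    then obtain a where x: "x = ?d a" by auto
    have "?d x = ?d (?b (?d a))" using bd x by simp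
    also have "\<dots> = x" using db[of "?d a"] bd[of a] x by simp
    finally show "?d x = x" .
  next
    fix x assume "?d x = x" then show "x \<in> range ?d" by (metis rangeI)
  qed
  have fixD2: "\<And>x. ?d x \<le> x \<Longrightarrow> x \<in> range ?d"
    using fixD ax by (meson antisym)
  have eq: "range ?d = range ?b"
  proof
    show "range ?d \<subseteq> range ?b" using bd by (metis image_subsetI rangeI)
    show "range ?b \<subseteq> range ?d" using db by (metis image_subsetI rangeI)
  qed
  have Dinf: "\<And>x y. x \<in> range ?d \<Longrightarrow> y \<in> range ?d \<Longrightarrow> inf x y \<in> range ?d"
  proof -
    fix x y assume x: "x \<in> range ?d" and y: "y \<in> range ?d"
    have "?d (inf x y) \<le> ?d x" "?d (inf x y) \<le> ?d y" using md by (auto intro: monoD)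
    then have "?d (inf x y) \<le> inf x y" using fixD x y by simp
    then show "inf x y \<in> range ?d" by (rule fixD2)
  qed
  have Dsup: "\<And>x y. x \<in> range ?d \<Longrightarrow> y \<in> range ?d \<Longrightarrow> sup x y \<in> range ?d"
  proof -
    fix x y assume x: "x \<in> range ?d" and y: "y \<in> range ?d"
    have "?d (sup x y) \<le> sup (?d x) (?d y)" using ax by blast
    then have "?d (sup x y) \<le> sup x y" using fixD x y by simp
    then show "sup x y \<in> range ?d" by (rule fixD2)
  qed
  have Dneg: "\<And>x. x \<in> range ?d \<Longrightarrow> imp x bot \<in> range ?d"
  proof -
    fix x assume x: "x \<in> range ?d"
    have cx: "sup x (imp x bot) = top" using x em by auto
    let ?z = "?d (imp x bot)"
    have "?b (imp (imp x bot) bot) \<le> imp ?z (?d bot)" using ax by blast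
    then have "?b x \<le> imp ?z bot" using hnotnot[OF h cx] dbot by simp
    moreover have "?b x = x" using x bd by auto
    ultimately have "x \<le> imp ?z bot" by simp
    then have "inf x ?z \<le> bot" using hi[OF h] by blast
    then have "inf ?z x \<le> bot" by (simp add: inf_commute)
    then have "?z \<le> imp x bot" using hi[OF h] by blast
    then show "imp x bot \<in> range ?d" by (rule fixD2)
  qed
  have Dimp: "\<And>x y. x \<in> range ?d \<Longrightarrow> y \<in> range ?d \<Longrightarrow> imp x y \<in> range ?d"
  proof -
    fix x y assume x: "x \<in> range ?d" and y: "y \<in> range ?d"
    have cx: "sup x (imp x bot) = top" using x em by auto
    show "imp x y \<in> range ?d" using Dsup[OF Dneg[OF x] y] hcompl_imp[OF h cx, of y] by (rule ssubst[rotated])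
  qed
  have "bot \<in> range ?d" using dbot by (metis rangeI)
  moreover have "top \<in> range ?d" using dbot by (metis rangeI top_unique)
  ultimately have "boolean_subalgebra imp (range ?d)"
    unfolding boolean_subalgebra_def heyting_subalgebra_def hneg_def
    using Dinf Dsup Dimp em by auto
  then show ?thesis using eq by simp
qed

end
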